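(* Let $X$ be a nontrivial real Banach space. Then $X$ has the diameter $2$ property if and only if $X^*$ is weakly octahedral.
   Context: $X$ has the diameter $2$ property if every nonempty relatively weakly open subset of the closed unit ball $B_X$ has diameter $2$. A Banach space $Z$ is weakly octahedral if for every finite-dimensional subspace $E$ of $Z$, every $z^*\in B_{Z^*}$, and every $\varepsilon>0$, there is a $y\in S_Z$ (unit sphere) such that $\|z+y\|\geq(1-\varepsilon)(|z^*(z)|+\|y\|)$ for all $z\in E$. *)

theory Defs
  imports "HOL-Analysis.Analysis"
begin

definition weak_topology :: "'a::real_normed_vector topology" where
  "weak_topology = topology_generated_by {{x. blinfun_apply (f::'a \<Rightarrow>\<^sub>L real) x \<in> U} | f U. open U}"

definition diameter_two_property :: "'a::real_normed_vector itself \<Rightarrow> bool" where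
  "diameter_two_property (_::'a itself) \<longleftrightarrow>
     (\<forall>W::'a set. openin (subtopology weak_topology (cball 0 1)) W \<and> W \<noteq> {} \<longrightarrow> diameter W = 2)"

definition weakly_octahedral :: "'z::real_normed_vector itself \<Rightarrow> bool" where
  "weakly_octahedral _ \<longleftrightarrow>
     (\<forall>F::'z set. finite F \<longrightarrow>
       (\<forall>zs::'z \<Rightarrow>\<^sub>L real. norm zs \<le> 1 \<longrightarrow>
         (\<forall>\<epsilon>>0. \<exists>y::'z. norm y = 1 \<and>
            (\<forall>z\<in>span F. norm (z + y) \<ge> (1 - \<epsilon>) * (\<bar>blinfun_apply zs z\<bar> + norm y)))))"

end

theory Submission
  imports Defs "HOL-Library.Function_Algebras"
begin


definition sublin :: "('v::real_vector \<Rightarrow> real) \<Rightarrow> bool" where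
  "sublin p \<longleftrightarrow> (\<forall>x y. p (x + y) \<le> p x + p y) \<and> (\<forall>a x. a \<ge> 0 \<longrightarrow> p (a *\<^sub>R x) = a * p x)"

definition goodG :: "('v::real_vector \<Rightarrow> real) \<Rightarrow> 'v \<Rightarrow> ('v \<times> real) set \<Rightarrow> bool" where
  "goodG p w G \<longleftrightarrow> (\<forall>x a b. (x,a) \<in> G \<longrightarrow> (x,b) \<in> G \<longrightarrow> a = b)
     \<and> (\<forall>x a y b. (x,a) \<in> G \<longrightarrow> (y,b) \<in> G \<longrightarrow> (x+y, a+b) \<in> G)
     \<and> (\<forall>x a r. (x,a) \<in> G \<longrightarrow> (r *\<^sub>R x, r*a) \<in> G)
     \<and> (\<forall>x a. (x,a) \<in> G \<longrightarrow> a \<le> p x)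
     \<and> (w, p w) \<in> G"

lemma sublin_zero: assumes "sublin p" shows "p 0 = 0"
  using assms unfolding sublin_def by (metis mult_zero_left order_refl scaleR_zero_left)

lemma sublin_neg: assumes "sublin p" shows "- p (- x) \<le> p x"
proof -
  have "p 0 \<le> p x + p (-x)" using assms unfolding sublin_def by (metis add.right_inverse)
  thus ?thesis using sublin_zero[OF assms] by linarith
qed

lemma goodG_chain:
  assumes C: "C \<in> chains {G. goodG p w G}" and ne: "C \<noteq> {}"
  shows "goodG p w (\<Union>C)"
proof -
  have CG: "\<And>G. G \<in> C \<Longrightarrow> goodG p w G" using C unfolding chains_def by auto
  have ch: "\<And>G H. G \<in> C \<Longrightarrow> H \<in> C \<Longrightarrow> G \<subseteq> H \<or> H \<subseteq> G" using C unfolding chains_def chain_subset_def by auto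
  have two: "\<exists>K\<in>C. u \<in> K \<and> v \<in> K" if "u \<in> \<Union>C" "v \<in> \<Union>C" for u v
  proof -
    from that obtain G H where "G \<in> C" "H \<in> C" "u \<in> G" "v \<in> H" by auto
    thus ?thesis using ch[of G H] by auto
  qed
  obtain G0 where "G0 \<in> C" using ne by auto
  show ?thesis unfolding goodG_def
  proof (intro conjI allI impI)
    fix x a b assume "(x,a) \<in> \<Union>C" "(x,b) \<in> \<Union>C"
    then obtain K where "K \<in> C" "(x,a) \<in> K" "(x,b) \<in> K" using two by blast
    thus "a = b" using CG[of K] unfolding goodG_def by blast
  next
    fix x a y b assume "(x,a) \<in> \<Union>C" "(y,b) \<in> \<Union>C"
    then obtain K where "K \<in> C" "(x,a) \<in> K" "(y,b) \<in> K" using two by blast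
    thus "(x+y,a+b) \<in> \<Union>C" using CG[of K] unfolding goodG_def by blast
  next
    fix x a r assume "(x,a) \<in> \<Union>C"
    then obtain K where "K \<in> C" "(x,a) \<in> K" by blast
    thus "(r *\<^sub>R x, r*a) \<in> \<Union>C" using CG[of K] unfolding goodG_def by blast
  next
    fix x a assume "(x,a) \<in> \<Union>C"
    then obtain K where "K \<in> C" "(x,a) \<in> K" by blast
    thus "a \<le> p x" using CG[of K] unfolding goodG_def by blast
  next
    show "(w, p w) \<in> \<Union>C" using CG[OF \<open>G0 \<in> C\<close>] \<open>G0 \<in> C\<close> unfolding goodG_def by blast
  qed
qed

lemma goodG_extend:
  assumes p: "sublin p" and G: "goodG p w G" and z: "\<forall>a. (z,a) \<notin> G"
  shows "\<exists>H. goodG p w H \<and> G \<subseteq> H \<and> G \<noteq> H"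
proof -
  note Gd = G[unfolded goodG_def]
  have Gf: "\<And>x a b. (x,a) \<in> G \<Longrightarrow> (x,b) \<in> G \<Longrightarrow> a = b" using Gd by blast
  have Ga: "\<And>x a y b. (x,a) \<in> G \<Longrightarrow> (y,b) \<in> G \<Longrightarrow> (x+y, a+b) \<in> G" using Gd by blast
  have Gs: "\<And>x a r. (x,a) \<in> G \<Longrightarrow> (r *\<^sub>R x, r*a) \<in> G" using Gd by blast
  have Gp: "\<And>x a. (x,a) \<in> G \<Longrightarrow> a \<le> p x" using Gd by blast
  have Gw: "(w, p w) \<in> G" using Gd by blast
  have padd: "\<And>x y. p (x + y) \<le> p x + p y" and phom: "\<And>a x. a \<ge> 0 \<Longrightarrow> p (a *\<^sub>R x) = a * p x"
    using p unfolding sublin_def by auto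
  have zero: "(0,0) \<in> G" using Gs[OF Gw, of 0] by (metis mult_zero_left scaleR_zero_left)
  define L where "L = {a - p (x - z) | x a. (x,a) \<in> G}"
  have bnd: "l \<le> p (y + z) - b" if "l \<in> L" "(y,b) \<in> G" for l y b
  proof -
    from that obtain x a where xa: "(x,a) \<in> G" "l = a - p (x - z)" unfolding L_def by auto
    have "(x+y, a+b) \<in> G" using Ga xa that by blast
    hence "a + b \<le> p (x + y)" using Gp by blast
    also have "\<dots> \<le> p (x - z) + p (y + z)" using padd[of "x - z" "y + z"] by (simp add: algebra_simps)
    finally show ?thesis using xa by linarith
  qed
  have Lne: "L \<noteq> {}" using zero unfolding L_def by blast
  have Lbdd: "bdd_above L" using bnd[OF _ zero] unfolding bdd_above_def by blast
  define c where "c = Sup L"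
  have c1: "a - p (x - z) \<le> c" if "(x,a) \<in> G" for x a
    unfolding c_def using that Lbdd by (intro cSup_upper) (auto simp: L_def)
  have c2: "c \<le> p (y + z) - b" if "(y,b) \<in> G" for y b
    unfolding c_def using Lne bnd[OF _ that] by (intro cSup_least) auto
  define H where "H = {(x + t *\<^sub>R z, a + t * c) | x a t. (x,a) \<in> G}"
  have dom_lin: "(x - x', a - a') \<in> G" if "(x,a) \<in> G" "(x',a') \<in> G" for x a x' a'
  proof -
    have "(-1 *\<^sub>R x', -1 * a') \<in> G" using Gs that by blast
    hence "(x + -1 *\<^sub>R x', a + -1 * a') \<in> G" using Ga that by blast
    thus ?thesis by simp
  qed
  have uniq: "t = t' \<and> x = x'" if "(x,a) \<in> G" "(x',a') \<in> G" "x + t *\<^sub>R z = x' + t' *\<^sub>R z" for x a x' a' t t'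
  proof (cases "t = t'")
    case True thus ?thesis using that by simp
  next
    case False
    have "(x - x', a - a') \<in> G" using dom_lin that by blast
    hence "((1/(t' - t)) *\<^sub>R (x - x'), (1/(t'-t)) * (a - a')) \<in> G" using Gs by blast
    moreover have "(1/(t' - t)) *\<^sub>R (x - x') = z"
    proof -
      have "x - x' = (t' - t) *\<^sub>R z" using that(3) by (simp add: algebra_simps)
      thus ?thesis using False by simp
    qed
    ultimately show ?thesis using z by auto
  qed
  have Hin: "\<And>x a t. (x,a) \<in> G \<Longrightarrow> (x + t *\<^sub>R z, a + t*c) \<in> H" unfolding H_def by blast
  have "goodG p w H" unfolding goodG_def
  proof (intro conjI allI impI)
    fix u a b assume "(u,a) \<in> H" "(u,b) \<in> H"
    obtain x1 a1 t1 where 1: "(x1,a1) \<in> G" "u = x1 + t1 *\<^sub>R z" "a = a1 + t1 * c"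
      using \<open>(u,a) \<in> H\<close> unfolding H_def by blast
    obtain x2 a2 t2 where 2: "(x2,a2) \<in> G" "u = x2 + t2 *\<^sub>R z" "b = a2 + t2 * c"
      using \<open>(u,b) \<in> H\<close> unfolding H_def by blast
    have tx: "t1 = t2 \<and> x1 = x2" using uniq[OF 1(1) 2(1), of t1 t2] 1(2) 2(2) by simp
    have "a1 = a2" using Gf[OF 1(1)] 2(1) tx by blast
    thus "a = b" using 1(3) 2(3) tx by simp
  next
    fix u a v b assume "(u,a) \<in> H" "(v,b) \<in> H"
    obtain x1 a1 t1 where 1: "(x1,a1) \<in> G" "u = x1 + t1 *\<^sub>R z" "a = a1 + t1 * c"
      using \<open>(u,a) \<in> H\<close> unfolding H_def by blast
    obtain x2 a2 t2 where 2: "(x2,a2) \<in> G" "v = x2 + t2 *\<^sub>R z" "b = a2 + t2 * c"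
      using \<open>(v,b) \<in> H\<close> unfolding H_def by blast
    have "(x1 + x2, a1 + a2) \<in> G" using Ga 1 2 by blast
    from Hin[OF this, of "t1 + t2"]
    show "(u+v, a+b) \<in> H" using 1 2 by (simp add: algebra_simps)
  next
    fix u a r assume "(u,a) \<in> H"
    then obtain x1 a1 t1 where 1: "(x1,a1) \<in> G" "u = x1 + t1 *\<^sub>R z" "a = a1 + t1 * c" unfolding H_def by auto
    have "(r *\<^sub>R x1, r * a1) \<in> G" using Gs 1 by blast
    from Hin[OF this, of "r * t1"]
    show "(r *\<^sub>R u, r*a) \<in> H" using 1 by (simp add: algebra_simps)
  next
    fix u a assume "(u,a) \<in> H"
    then obtain x a1 t where 1: "(x,a1) \<in> G" "u = x + t *\<^sub>R z" "a = a1 + t * c" unfolding H_def by auto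
    show "a \<le> p u"
    proof (cases t "0::real" rule: linorder_cases)
      case equal thus ?thesis using 1 Gp by auto
    next
      case greater
      have "((1/t) *\<^sub>R x, (1/t) * a1) \<in> G" using Gs 1 by blast
      from c2[OF this] have "c \<le> p ((1/t) *\<^sub>R x + z) - (1/t) * a1" .
      hence "t * c \<le> t * p ((1/t) *\<^sub>R x + z) - a1" using greater
        by (simp add: field_simps)
      also have "t * p ((1/t) *\<^sub>R x + z) = p (t *\<^sub>R ((1/t) *\<^sub>R x + z))" using phom[of t] greater by simp
      also have "t *\<^sub>R ((1/t) *\<^sub>R x + z) = u" using 1 greater by (simp add: algebra_simps)
      finally show ?thesis using 1 by linarith
    next
      case less
      define s where "s = -t"
      have s: "s > 0" using less s_def by simp
      have "((1/s) *\<^sub>R x, (1/s) * a1) \<in> G" using Gs 1 by blast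
      from c1[OF this] have "(1/s) * a1 - p ((1/s) *\<^sub>R x - z) \<le> c" .
      hence "a1 - s * p ((1/s) *\<^sub>R x - z) \<le> s * c" using s
        by (simp add: field_simps)
      also have "s * p ((1/s) *\<^sub>R x - z) = p (s *\<^sub>R ((1/s) *\<^sub>R x - z))" using phom[of s] s by simp
      also have "s *\<^sub>R ((1/s) *\<^sub>R x - z) = u" using 1 s s_def by (simp add: algebra_simps)
      finally show ?thesis using 1 s_def by (simp add: algebra_simps)
    qed
  next
    show "(w, p w) \<in> H" using Hin[OF Gw, of 0] by simp
  qed
  moreover have "G \<subseteq> H" using Hin[of _ _ 0] by auto
  moreover have "(z, c) \<in> H" using Hin[OF zero, of 1] by simp
  ultimately show ?thesis using z by blast
qed

lemma hahn_banach:
  fixes p :: "'v::real_vector \<Rightarrow> real"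
  assumes p: "sublin p"
  shows "\<exists>f. linear f \<and> (\<forall>x. f x \<le> p x) \<and> f w = p w"
proof -
  have padd: "\<And>x y. p (x + y) \<le> p x + p y" and phom: "\<And>a x. a \<ge> 0 \<Longrightarrow> p (a *\<^sub>R x) = a * p x"
    using p unfolding sublin_def by auto
  define G0 where "G0 = {(r *\<^sub>R w, r * p w) | r. True}"
  have "goodG p w G0" unfolding goodG_def
  proof (intro conjI allI impI)
    fix x a b assume "(x,a) \<in> G0" "(x,b) \<in> G0"
    obtain r where r1: "x = r *\<^sub>R w" "a = r * p w" using \<open>(x,a) \<in> G0\<close> unfolding G0_def by blast
    obtain s where s1: "x = s *\<^sub>R w" "b = s * p w" using \<open>(x,b) \<in> G0\<close> unfolding G0_def by blast
    note rs = r1 s1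
    show "a = b"
    proof (cases "w = 0")
      case True thus ?thesis using rs sublin_zero[OF p] by simp
    next
      case False
      hence "r = s" using rs by (metis scaleR_cancel_right)
      thus ?thesis using rs by simp
    qed
  next
    fix x a y b assume "(x,a) \<in> G0" "(y,b) \<in> G0"
    then obtain r s where "x = r *\<^sub>R w" "a = r * p w" "y = s *\<^sub>R w" "b = s * p w" unfolding G0_def by blast
    hence "x + y = (r + s) *\<^sub>R w" "a + b = (r + s) * p w" by (simp_all add: algebra_simps)
    thus "(x+y,a+b) \<in> G0" unfolding G0_def by blast
  next
    fix x a r assume "(x,a) \<in> G0"
    then obtain s where "x = s *\<^sub>R w" "a = s * p w" unfolding G0_def by blast
    hence "r *\<^sub>R x = (r * s) *\<^sub>R w" "r * a = (r * s) * p w" by simp_all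
    thus "(r *\<^sub>R x, r*a) \<in> G0" unfolding G0_def by blast
  next
    fix x a assume "(x,a) \<in> G0"
    then obtain r where r: "x = r *\<^sub>R w" "a = r * p w" unfolding G0_def by auto
    show "a \<le> p x"
    proof (cases "r \<ge> 0")
      case True thus ?thesis using r phom by simp
    next
      case False
      have "p (- x) = (-r) * p w" using r phom[of "-r" w] False by simp
      hence "a = - p (- x)" using r by simp
      thus ?thesis using sublin_neg[OF p] by simp
    qed
  next
    have "w = 1 *\<^sub>R w" "p w = 1 * p w" by simp_all
    thus "(w, p w) \<in> G0" unfolding G0_def by blast
  qed
  have "\<exists>M\<in>{G. goodG p w G}. \<forall>X\<in>{G. goodG p w G}. M \<subseteq> X \<longrightarrow> X = M"
  proof (rule Zorn_Lemma2, intro ballI)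
    fix C assume C: "C \<in> chains {G. goodG p w G}"
    show "\<exists>U\<in>{G. goodG p w G}. \<forall>X\<in>C. X \<subseteq> U"
    proof (cases "C = {}")
      case True thus ?thesis using \<open>goodG p w G0\<close> by blast
    next
      case False thus ?thesis using goodG_chain[OF C False] by blast
    qed
  qed
  then obtain M where M: "goodG p w M" and max: "\<And>X. goodG p w X \<Longrightarrow> M \<subseteq> X \<Longrightarrow> X = M" by blast
  have tot: "\<exists>a. (x,a) \<in> M" for x
    using goodG_extend[OF p M, of x] max by blast
  note Md = M[unfolded goodG_def]
  have Mf: "\<And>x a b. (x,a) \<in> M \<Longrightarrow> (x,b) \<in> M \<Longrightarrow> a = b" using Md by blast
  have Ma: "\<And>x a y b. (x,a) \<in> M \<Longrightarrow> (y,b) \<in> M \<Longrightarrow> (x+y, a+b) \<in> M" using Md by blast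
  have Ms: "\<And>x a r. (x,a) \<in> M \<Longrightarrow> (r *\<^sub>R x, r*a) \<in> M" using Md by blast
  have Mp: "\<And>x a. (x,a) \<in> M \<Longrightarrow> a \<le> p x" using Md by blast
  have Mw: "(w, p w) \<in> M" using Md by blast
  define f where "f x = (THE a. (x,a) \<in> M)" for x
  have fM: "(x, f x) \<in> M" for x
  proof -
    obtain a where "(x,a) \<in> M" using tot by blast
    moreover hence "\<And>b. (x,b) \<in> M \<Longrightarrow> b = a" using Mf by blast
    ultimately show ?thesis unfolding f_def by (metis theI)
  qed
  have fval: "(x,a) \<in> M \<Longrightarrow> f x = a" for x a using fM Mf by blast
  have "linear f"
  proof (rule linearI)
    fix x y show "f (x + y) = f x + f y" using fval Ma fM by blast
  next
    fix r x show "f (r *\<^sub>R x) = r *\<^sub>R f x" using fval[OF Ms[OF fM]] by simp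
  qed
  moreover have "\<forall>x. f x \<le> p x" using fM Mp by blast
  moreover have "f w = p w" using fval Mw by blast
  ultimately show ?thesis by blast
qed



instantiation "fun" :: (type, real_vector) real_vector
begin
definition scaleR_fun :: "real \<Rightarrow> ('a \<Rightarrow> 'b) \<Rightarrow> 'a \<Rightarrow> 'b" where
  "scaleR_fun r f = (\<lambda>x. r *\<^sub>R f x)"
instance by standard (auto simp: scaleR_fun_def fun_eq_iff algebra_simps)
end

lemma sum_fun_apply: "(\<Sum>i\<in>I. F i) x = (\<Sum>i\<in>I. F i x)"
  by (induction I rule: infinite_finite_induct) auto

lemma scaleR_fun_apply[simp]: "(r *\<^sub>R f) x = r *\<^sub>R f x"
  by (simp add: scaleR_fun_def)

lemma blinfun_sum_apply: "blinfun_apply (\<Sum>i\<in>I. F i) x = (\<Sum>i\<in>I. blinfun_apply (F i) x)"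
  by (induction I rule: infinite_finite_induct) (auto simp: blinfun.bilinear_simps)

lemma helly:
  fixes I :: "('a::real_normed_vector \<Rightarrow>\<^sub>L real) set" and w :: "('a \<Rightarrow>\<^sub>L real) \<Rightarrow> real"
  assumes fin: "finite I" and H: "\<And>c. (\<Sum>f\<in>I. c f * w f) \<le> norm (\<Sum>f\<in>I. c f *\<^sub>R f)"
    and eta: "\<eta> > 0"
  shows "\<exists>x. norm x \<le> 1 \<and> (\<forall>f\<in>I. \<bar>blinfun_apply f x - w f\<bar> < \<eta>)"
proof -
  define \<kappa> where "\<kappa> = \<eta>/2"
  have kp: "\<kappa> > 0" using eta by (simp add: \<kappa>_def)
  define T where "T v x = norm x + (\<Sum>f\<in>I. \<bar>v f - blinfun_apply f x\<bar>) / \<kappa>" for v :: "('a \<Rightarrow>\<^sub>L real) \<Rightarrow> real" and x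
  define p where "p v = Inf (range (T v))" for v
  have Tnn: "T v x \<ge> 0" for v x unfolding T_def using kp by (auto intro!: add_nonneg_nonneg sum_nonneg divide_nonneg_pos)
  have bdd: "bdd_below (range (T v))" for v using Tnn by (auto intro!: bdd_belowI)
  have pT: "\<And>v x. p v \<le> T v x" unfolding p_def using bdd by (intro cInf_lower) auto
  have pge: "\<And>v c. (\<And>x. c \<le> T v x) \<Longrightarrow> p v \<ge> c" unfolding p_def by (intro cInf_greatest) auto
  have pnn: "p v \<ge> 0" for v using pge Tnn by blast
  have Tadd: "\<And>u v x y. T (u + v) (x + y) \<le> T u x + T v y"
  proof -
    fix u v x y
    have "(\<Sum>f\<in>I. \<bar>(u + v) f - blinfun_apply f (x + y)\<bar>) \<le> (\<Sum>f\<in>I. \<bar>u f - blinfun_apply f x\<bar> + \<bar>v f - blinfun_apply f y\<bar>)"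
      by (intro sum_mono) (simp add: blinfun.add_right abs_triangle_ineq[THEN order_trans[rotated]] algebra_simps)
    hence "(\<Sum>f\<in>I. \<bar>(u + v) f - blinfun_apply f (x + y)\<bar>)/\<kappa> \<le> (\<Sum>f\<in>I. \<bar>u f - blinfun_apply f x\<bar>)/\<kappa> + (\<Sum>f\<in>I. \<bar>v f - blinfun_apply f y\<bar>)/\<kappa>"
      using kp by (simp add: sum.distrib add_divide_distrib[symmetric] divide_right_mono)
    thus "T (u + v) (x + y) \<le> T u x + T v y" unfolding T_def using norm_triangle_ineq[of x y] by linarith
  qed
  have Tscale: "\<And>a v x. a > 0 \<Longrightarrow> T (a *\<^sub>R v) (a *\<^sub>R x) = a * T v x"
  proof -
    fix a :: real and v x assume that: "a > 0" 
    have "(\<Sum>f\<in>I. \<bar>(a *\<^sub>R v) f - blinfun_apply f (a *\<^sub>R x)\<bar>) = a * (\<Sum>f\<in>I. \<bar>v f - blinfun_apply f x\<bar>)"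
      using that by (simp add: sum_distrib_left blinfun.scaleR_right abs_mult right_diff_distrib[symmetric])
    thus "T (a *\<^sub>R v) (a *\<^sub>R x) = a * T v x" unfolding T_def using that by (simp add: algebra_simps)
  qed
  have sub: "sublin p" unfolding sublin_def
  proof (intro conjI allI impI)
    fix u v
    have "p (u + v) - T v y \<le> p u" for y
    proof (rule pge)
      fix x show "p (u + v) - T v y \<le> T u x" using pT[of "u+v" "x + y"] Tadd[of u v x y] by linarith
    qed
    hence "p (u + v) - p u \<le> p v"
      by (intro pge) (smt (verit))
    thus "p (u + v) \<le> p u + p v" by simp
  next
    fix a :: real and v assume a: "a \<ge> 0"
    show "p (a *\<^sub>R v) = a * p v"
    proof (cases "a = 0")
      case True
      have "T 0 0 = 0" unfolding T_def by simp
      hence "p 0 = 0" using pT[of 0 0] pnn[of 0] by simp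
      thus ?thesis using True by simp
    next
      case False
      hence a: "a > 0" using a by simp
      have "p (a *\<^sub>R v) \<le> a * p v"
      proof -
        have "p (a *\<^sub>R v) / a \<le> T v x" for x
          using pT[of "a *\<^sub>R v" "a *\<^sub>R x"] Tscale[OF a] a by (simp add: field_simps mult.commute)
        hence "p (a *\<^sub>R v) / a \<le> p v" using pge by blast
        thus ?thesis using a by (simp add: field_simps mult.commute)
      qed
      moreover have "a * p v \<le> p (a *\<^sub>R v)"
      proof -
        have "a * p v \<le> T (a *\<^sub>R v) x" for x
        proof -
          have "T (a *\<^sub>R v) x = a * T v ((1/a) *\<^sub>R x)" using Tscale[OF a, of v "(1/a) *\<^sub>R x"] a by simp
          thus ?thesis using pT[of v "(1/a) *\<^sub>R x"] a by simp
        qed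
        thus ?thesis using pge by blast
      qed
      ultimately show ?thesis by simp
    qed
  qed
  obtain \<psi> where lin: "linear \<psi>" and dom: "\<And>v. \<psi> v \<le> p v" and pw: "\<psi> w = p w"
    using hahn_banach[OF sub, of w] by blast
  define e where "e g = (\<lambda>f. if f = g then 1 else (0::real))" for g :: "'a \<Rightarrow>\<^sub>L real"
  define c where "c g = \<psi> (e g)" for g
  have rep: "\<psi> v = (\<Sum>g\<in>I. v g * c g)" for v
  proof -
    define r where "r = v - (\<Sum>g\<in>I. v g *\<^sub>R e g)"
    have r0: "r f = 0" if "f \<in> I" for f
    proof -
      have "(\<Sum>g\<in>I. v g *\<^sub>R e g) f = (\<Sum>g\<in>I. v g * e g f)" by (simp add: sum_fun_apply)
      also have "\<dots> = (\<Sum>g\<in>I. if g = f then v g else 0)" by (rule sum.cong) (auto simp: e_def)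
      also have "\<dots> = v f" using that fin by (simp add: sum.delta)
      finally show ?thesis by (simp add: r_def)
    qed
    have "T r 0 = 0" "T (-r) 0 = 0" unfolding T_def using r0 by auto
    hence "p r \<le> 0" "p (-r) \<le> 0" using pT by metis+
    hence "\<psi> r \<le> 0" "\<psi> (-r) \<le> 0" using dom by (metis order_trans)+
    moreover have "\<psi> (-r) = - \<psi> r" using lin by (simp add: linear_neg)
    ultimately have "\<psi> r = 0" by simp
    hence "\<psi> v = \<psi> (\<Sum>g\<in>I. v g *\<^sub>R e g)" unfolding r_def using lin by (simp add: linear_diff)
    also have "\<dots> = (\<Sum>g\<in>I. v g * c g)" using lin by (simp add: linear_sum linear_scale c_def)
    finally show ?thesis .
  qed
  define gc where "gc = (\<Sum>g\<in>I. c g *\<^sub>R g)"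
  have gcx: "blinfun_apply gc x = \<psi> (\<lambda>f. blinfun_apply f x)" for x
    by (simp add: rep gc_def blinfun_sum_apply blinfun.scaleR_left mult.commute)
  have gcle: "blinfun_apply gc x \<le> norm x" for x
  proof -
    have "T (\<lambda>f. blinfun_apply f x) x = norm x" unfolding T_def by simp
    thus ?thesis using gcx dom pT by (metis order_trans)
  qed
  have "norm gc \<le> 1"
  proof (rule norm_blinfun_bound)
    fix x
    have "blinfun_apply gc (-x) \<le> norm x" using gcle[of "-x"] by simp
    hence "- blinfun_apply gc x \<le> norm x" by (simp add: blinfun.minus_right)
    thus "norm (blinfun_apply gc x) \<le> 1 * norm x" using gcle[of x] by auto
  qed simp
  moreover have "p w = (\<Sum>f\<in>I. c f * w f)" using pw rep by (simp add: mult.commute)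
  ultimately have pw1: "p w \<le> 1" using H[of c] unfolding gc_def by linarith
  define S where "S = (\<Sum>f\<in>I. \<bar>w f\<bar>)"
  have S0: "S \<ge> 0" unfolding S_def by (simp add: sum_nonneg)
  define \<theta> where "\<theta> = \<kappa> / (2 * (\<kappa> + S))"
  have th0: "\<theta> > 0" unfolding \<theta>_def using kp S0 by simp
  have thk: "\<theta> * (\<kappa> + S) = \<kappa>/2" unfolding \<theta>_def using kp S0 by (simp add: field_simps)
  have th1: "\<theta> \<le> 1/2" unfolding \<theta>_def using kp S0 by (simp add: field_simps)
  have "Inf (range (T w)) < 1 + \<theta>" using pw1 th0 unfolding p_def by simp
  then obtain x where x: "T w x < 1 + \<theta>" using cInf_less_iff[OF _ bdd] by auto
  define s where "s = 1/(1+\<theta>)"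
  have s: "0 < s" "s \<le> 1" "1 - s \<le> \<theta>" using th0 unfolding s_def by (auto simp: field_simps)
  have nx: "norm x < 1 + \<theta>" using x Tnn unfolding T_def
    using kp by (smt (verit) divide_nonneg_pos sum_nonneg abs_ge_zero)
  have sumx: "(\<Sum>f\<in>I. \<bar>w f - blinfun_apply f x\<bar>) < \<kappa> * (1 + \<theta>)"
  proof -
    have "(\<Sum>f\<in>I. \<bar>w f - blinfun_apply f x\<bar>) / \<kappa> < 1 + \<theta>" using x norm_ge_zero[of x] unfolding T_def by linarith
    thus ?thesis using kp by (simp add: field_simps mult.commute)
  qed
  show ?thesis
  proof (intro exI conjI ballI)
    show "norm (s *\<^sub>R x) \<le> 1" using nx s unfolding s_def using th0 by (simp add: field_simps)
  next
    fix f assume f: "f \<in> I"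
    have wf: "\<bar>w f\<bar> \<le> S" unfolding S_def using fin f by (intro member_le_sum) auto
    have d1: "\<bar>w f - blinfun_apply f x\<bar> < \<kappa> * (1 + \<theta>)"
      using sumx member_le_sum[of f I "\<lambda>f. \<bar>w f - blinfun_apply f x\<bar>"] f fin by simp
    have "blinfun_apply f (s *\<^sub>R x) - w f = s * (blinfun_apply f x - w f) - (1 - s) * w f"
      by (simp add: blinfun.scaleR_right algebra_simps)
    hence "\<bar>blinfun_apply f (s *\<^sub>R x) - w f\<bar> \<le> s * \<bar>blinfun_apply f x - w f\<bar> + (1 - s) * \<bar>w f\<bar>"
      using s by (simp add: abs_mult abs_triangle_ineq4[THEN order_trans])
    also have "\<dots> \<le> \<bar>blinfun_apply f x - w f\<bar> + \<theta> * S"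
      using s wf th0 by (intro add_mono mult_mono) (auto intro: mult_left_le_one_le)
    also have "\<dots> < \<kappa> * (1 + \<theta>) + \<theta> * S" using d1 by (simp add: abs_minus_commute)
    also have "\<dots> = \<kappa> + \<kappa>/2" using thk by (simp add: algebra_simps)
    also have "\<dots> < \<eta>" using kp unfolding \<kappa>_def by simp
    finally show "\<bar>blinfun_apply f (s *\<^sub>R x) - w f\<bar> < \<eta>" .
  qed
qed



lemma norming:
  fixes x :: "'a::real_normed_vector"
  shows "\<exists>f::'a \<Rightarrow>\<^sub>L real. norm f \<le> 1 \<and> blinfun_apply f x = norm x"
proof -
  have "sublin (norm :: 'a \<Rightarrow> real)" unfolding sublin_def
    by (auto simp: norm_triangle_ineq)
  from hahn_banach[OF this, of x] obtain \<psi> where lin: "linear \<psi>" and le: "\<And>v. \<psi> v \<le> norm v" and px: "\<psi> x = norm x"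
    by blast
  have ab: "\<bar>\<psi> v\<bar> \<le> norm v" for v
  proof -
    have "\<psi> (-v) = - \<psi> v" using lin by (simp add: linear_neg)
    thus ?thesis using le[of v] le[of "-v"] by auto
  qed
  have bl: "bounded_linear \<psi>"
    using lin ab by (intro bounded_linear_intro[where K=1]) (auto simp: linear_add linear_scale)
  show ?thesis
  proof (intro exI conjI)
    show "norm (Blinfun \<psi>) \<le> 1"
      by (rule norm_blinfun_bound) (auto simp: bounded_linear_Blinfun_apply[OF bl] ab)
    show "blinfun_apply (Blinfun \<psi>) x = norm x" by (simp add: bounded_linear_Blinfun_apply[OF bl] px)
  qed
qed

lemma indep_bound:
  fixes B :: "'v::real_normed_vector set"
  assumes "finite B" "independent B"
  shows "\<exists>K\<ge>0. \<forall>c. (\<Sum>b\<in>B. \<bar>c b\<bar>) \<le> K * norm (\<Sum>b\<in>B. c b *\<^sub>R b)"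
  using assms
proof (induction B rule: finite_induct)
  case empty thus ?case by auto
next
  case (insert a B)
  have indB: "independent B" and aB: "a \<notin> span B" using insert.prems insert.hyps(2) by (auto simp: independent_insert)
  obtain K where K0: "K \<ge> 0" and K: "\<And>c. (\<Sum>b\<in>B. \<bar>c b\<bar>) \<le> K * norm (\<Sum>b\<in>B. c b *\<^sub>R b)"
    using insert.IH[OF indB] by blast
  have "\<exists>r>0. \<forall>c. r \<le> norm (a + (\<Sum>b\<in>B. c b *\<^sub>R b))"
  proof (rule ccontr)
    assume "\<not> ?thesis"
    hence "\<forall>n::nat. \<exists>c. norm (a + (\<Sum>b\<in>B. c b *\<^sub>R b)) < 1 / Suc n"
      by (metis not_le of_nat_0_less_iff zero_less_Suc zero_less_divide_1_iff)
    then obtain cs where cs: "\<And>n. norm (a + (\<Sum>b\<in>B. cs n b *\<^sub>R b)) < 1 / Suc n" by metis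
    define V where "V n = (\<Sum>b\<in>B. cs n b *\<^sub>R b)" for n
    have g0: "(\<lambda>n. inverse (real (Suc n))) \<longlonglongrightarrow> 0" by (rule LIMSEQ_inverse_real_of_nat)
    have gle: "norm (a + V n) \<le> inverse (real (Suc n))" for n
      using cs[of n] unfolding V_def by (simp add: divide_inverse)
    have "(\<lambda>n. a + V n) \<longlonglongrightarrow> 0"
      by (rule Lim_null_comparison[OF always_eventually g0]) (use gle in blast)
    hence Vlim: "V \<longlonglongrightarrow> -a" using tendsto_diff[OF _ tendsto_const[of a]] by fastforce
    hence cV: "Cauchy V" by (rule LIMSEQ_imp_Cauchy)
    have cc: "Cauchy (\<lambda>n. cs n b)" if b: "b \<in> B" for b
    proof (rule CauchyI)
      fix e :: real assume e: "e > 0"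
      obtain M where M: "\<And>m n. m \<ge> M \<Longrightarrow> n \<ge> M \<Longrightarrow> norm (V m - V n) < e / (K + 1)"
        using CauchyD[OF cV, of "e / (K+1)"] e K0 by auto
      have "norm (cs m b - cs n b) < e" if "m \<ge> M" "n \<ge> M" for m n
      proof -
        have "\<bar>cs m b - cs n b\<bar> \<le> (\<Sum>b\<in>B. \<bar>cs m b - cs n b\<bar>)"
          using b insert.hyps(1) by (intro member_le_sum) auto
        also have "\<dots> \<le> K * norm (\<Sum>b\<in>B. (cs m b - cs n b) *\<^sub>R b)" by (rule K)
        also have "(\<Sum>b\<in>B. (cs m b - cs n b) *\<^sub>R b) = V m - V n"
          by (simp add: V_def scaleR_left_diff_distrib sum_subtractf)
        also have "K * norm (V m - V n) \<le> K * (e / (K + 1))"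
          using M[OF that] K0 by (intro mult_left_mono) auto
        also have "\<dots> < e" using K0 e by (simp add: field_simps)
        finally show ?thesis by simp
      qed
      thus "\<exists>M. \<forall>m\<ge>M. \<forall>n\<ge>M. norm (cs m b - cs n b) < e" by blast
    qed
    define cl where "cl b = lim (\<lambda>n. cs n b)" for b
    have cl: "(\<lambda>n. cs n b) \<longlonglongrightarrow> cl b" if "b \<in> B" for b
      using cc[OF that] unfolding cl_def Cauchy_convergent_iff convergent_LIMSEQ_iff .
    have "V \<longlonglongrightarrow> (\<Sum>b\<in>B. cl b *\<^sub>R b)"
      unfolding V_def by (intro tendsto_sum tendsto_scaleR cl tendsto_const)
    hence "-a = (\<Sum>b\<in>B. cl b *\<^sub>R b)" using Vlim LIMSEQ_unique by blast
    hence "-a \<in> span B" by (auto intro: span_sum span_scale span_base)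
    hence "a \<in> span B" using span_neg by fastforce
    thus False using aB by simp
  qed
  then obtain r where r0: "r > 0" and r: "\<And>c. r \<le> norm (a + (\<Sum>b\<in>B. c b *\<^sub>R b))" by blast
  define K' where "K' = 1/r + K * (1 + norm a / r)"
  show ?case
  proof (intro exI conjI allI)
    show "K' \<ge> 0" unfolding K'_def using r0 K0 by simp
  next
    fix c :: "'v \<Rightarrow> real"
    define t where "t = c a"
    define v where "v = (\<Sum>b\<in>B. c b *\<^sub>R b)"
    define N where "N = norm (\<Sum>b\<in>insert a B. c b *\<^sub>R b)"
    have Neq: "N = norm (t *\<^sub>R a + v)" unfolding N_def t_def v_def using insert.hyps by simp
    have tN: "\<bar>t\<bar> * r \<le> N"
    proof (cases "t = 0")
      case True thus ?thesis unfolding N_def by simp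
    next
      case False
      have "t *\<^sub>R a + v = t *\<^sub>R (a + (\<Sum>b\<in>B. (c b / t) *\<^sub>R b))"
        using False by (simp add: v_def scaleR_sum_right algebra_simps)
      hence "N = \<bar>t\<bar> * norm (a + (\<Sum>b\<in>B. (c b / t) *\<^sub>R b))" using Neq by simp
      thus ?thesis using r[of "\<lambda>b. c b / t"] by (simp add: mult_left_mono)
    qed
    have tN': "\<bar>t\<bar> \<le> N / r" using tN r0 by (simp add: field_simps)
    have "norm v \<le> N + \<bar>t\<bar> * norm a"
    proof -
      have "v = (t *\<^sub>R a + v) - t *\<^sub>R a" by simp
      hence "norm v \<le> norm (t *\<^sub>R a + v) + norm (t *\<^sub>R a)" using norm_triangle_ineq4[of "t *\<^sub>R a + v" "t *\<^sub>R a"] by simp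
      thus ?thesis using Neq by simp
    qed
    also have "\<dots> \<le> N + N / r * norm a" using mult_right_mono[OF tN' norm_ge_zero[of a]] by simp
    finally have vN: "norm v \<le> N * (1 + norm a / r)" by (simp add: algebra_simps)
    have "(\<Sum>b\<in>insert a B. \<bar>c b\<bar>) = \<bar>t\<bar> + (\<Sum>b\<in>B. \<bar>c b\<bar>)" using insert.hyps t_def by simp
    also have "\<dots> \<le> N / r + K * norm v" using tN' K[of c] unfolding v_def by linarith
    also have "\<dots> \<le> N / r + K * (N * (1 + norm a / r))" using vN K0 by (simp add: mult_left_mono)
    also have "\<dots> = K' * N" unfolding K'_def by (simp add: algebra_simps)
    finally show "(\<Sum>b\<in>insert a B. \<bar>c b\<bar>) \<le> K' * norm (\<Sum>b\<in>insert a B. c b *\<^sub>R b)" unfolding N_def .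
  qed
qed



definition wnb :: "'a::real_normed_vector set \<Rightarrow> bool" where
  "wnb U \<longleftrightarrow> (\<forall>x\<in>U. \<exists>I \<delta>. finite I \<and> (\<delta>::real) > 0 \<and>
      {y. \<forall>f\<in>I. \<bar>blinfun_apply (f::'a \<Rightarrow>\<^sub>L real) y - blinfun_apply f x\<bar> < \<delta>} \<subseteq> U)"

lemma wnb_Int: assumes "wnb A" "wnb B" shows "wnb (A \<inter> B)"
  unfolding wnb_def
proof
  fix x assume x: "x \<in> A \<inter> B"
  obtain I1 d1 where 1: "finite I1" "d1 > 0" "{y. \<forall>f\<in>I1. \<bar>blinfun_apply (f::'a \<Rightarrow>\<^sub>L real) y - blinfun_apply f x\<bar> < d1} \<subseteq> A"
    using assms(1) x unfolding wnb_def by blast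
  obtain I2 d2 where 2: "finite I2" "d2 > 0" "{y. \<forall>f\<in>I2. \<bar>blinfun_apply (f::'a \<Rightarrow>\<^sub>L real) y - blinfun_apply f x\<bar> < d2} \<subseteq> B"
    using assms(2) x unfolding wnb_def by blast
  have "{y. \<forall>f\<in>I1 \<union> I2. \<bar>blinfun_apply f y - blinfun_apply f x\<bar> < min d1 d2} \<subseteq> A \<inter> B"
  proof
    fix y assume y: "y \<in> {y. \<forall>f\<in>I1 \<union> I2. \<bar>blinfun_apply f y - blinfun_apply f x\<bar> < min d1 d2}"
    have "y \<in> {y. \<forall>f\<in>I1. \<bar>blinfun_apply f y - blinfun_apply f x\<bar> < d1}" using y by auto
    moreover have "y \<in> {y. \<forall>f\<in>I2. \<bar>blinfun_apply f y - blinfun_apply f x\<bar> < d2}" using y by auto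
    ultimately show "y \<in> A \<inter> B" using 1(3) 2(3) by blast
  qed
  moreover have "finite (I1 \<union> I2)" "min d1 d2 > 0" using 1 2 by auto
  ultimately show "\<exists>I \<delta>. finite I \<and> (\<delta>::real) > 0 \<and>
      {y. \<forall>f\<in>I. \<bar>blinfun_apply (f::'a \<Rightarrow>\<^sub>L real) y - blinfun_apply f x\<bar> < \<delta>} \<subseteq> A \<inter> B" by blast
qed

lemma wnb_UN: assumes "\<And>k. k \<in> K \<Longrightarrow> wnb k" shows "wnb (\<Union>K)"
  unfolding wnb_def
proof
  fix x assume "x \<in> \<Union>K"
  then obtain k where k: "k \<in> K" "x \<in> k" by blast
  obtain I d where "finite I" "d > 0" "{y. \<forall>f\<in>I. \<bar>blinfun_apply (f::'a \<Rightarrow>\<^sub>L real) y - blinfun_apply f x\<bar> < d} \<subseteq> k"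
    using assms[OF k(1)] k(2) unfolding wnb_def by blast
  moreover have "k \<subseteq> \<Union>K" using k by blast
  ultimately show "\<exists>I \<delta>. finite I \<and> (\<delta>::real) > 0 \<and>
      {y. \<forall>f\<in>I. \<bar>blinfun_apply (f::'a \<Rightarrow>\<^sub>L real) y - blinfun_apply f x\<bar> < \<delta>} \<subseteq> \<Union>K" by blast
qed

lemma wnb_basis: fixes f :: "'a::real_normed_vector \<Rightarrow>\<^sub>L real" assumes "open V" shows "wnb {x::'a. blinfun_apply f x \<in> V}"
  unfolding wnb_def
proof
  fix x assume "x \<in> {x::'a. blinfun_apply f x \<in> V}"
  hence "blinfun_apply f x \<in> V" by simp
  then obtain e where e: "e > 0" "ball (blinfun_apply f x) e \<subseteq> V" using assms open_contains_ball by blast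
  have "{y. \<forall>g\<in>{f}. \<bar>blinfun_apply g y - blinfun_apply g x\<bar> < e} \<subseteq> {x::'a. blinfun_apply f x \<in> V}"
    using e by (auto simp: dist_real_def abs_minus_commute)
  thus "\<exists>I \<delta>. finite I \<and> (\<delta>::real) > 0 \<and>
      {y. \<forall>f\<in>I. \<bar>blinfun_apply (f::'a \<Rightarrow>\<^sub>L real) y - blinfun_apply f x\<bar> < \<delta>} \<subseteq> {x::'a. blinfun_apply f x \<in> V}"
    using e(1) by blast
qed

lemma weak_nbhd:
  fixes U :: "'a::real_normed_vector set"
  assumes "openin weak_topology U" "x \<in> U"
  shows "\<exists>I \<delta>. finite I \<and> (\<delta>::real) > 0 \<and> {y. \<forall>f\<in>I. \<bar>blinfun_apply (f::'a \<Rightarrow>\<^sub>L real) y - blinfun_apply f x\<bar> < \<delta>} \<subseteq> U"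
proof -
  have "generate_topology_on {{x. blinfun_apply (f::'a \<Rightarrow>\<^sub>L real) x \<in> U} | f U. open U} U"
    using assms(1) unfolding weak_topology_def openin_topology_generated_by_iff .
  hence "wnb U"
  proof (induction rule: generate_topology_on.induct)
    case Empty thus ?case by (simp add: wnb_def)
  next
    case (Int a b) thus ?case using wnb_Int by blast
  next
    case (UN K) thus ?case using wnb_UN[of K] by blast
  next
    case (Basis s) thus ?case using wnb_basis by blast
  qed
  thus ?thesis using assms(2) unfolding wnb_def by blast
qed

lemma weak_open_finite:
  fixes c :: "('a::real_normed_vector \<Rightarrow>\<^sub>L real) \<Rightarrow> real"
  assumes "finite I"
  shows "openin weak_topology {x::'a. \<forall>f\<in>I. \<bar>blinfun_apply f x - c f\<bar> < \<eta>}"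
  using assms
proof (induction I rule: finite_induct)
  case empty
  have "openin weak_topology {x::'a. blinfun_apply 0 x \<in> UNIV}"
    unfolding weak_topology_def openin_topology_generated_by_iff
    by (rule generate_topology_on.Basis) blast
  thus ?case by simp
next
  case (insert g I)
  have "openin weak_topology {x::'a. blinfun_apply g x \<in> ball (c g) \<eta>}"
    unfolding weak_topology_def openin_topology_generated_by_iff
    by (rule generate_topology_on.Basis) blast
  from openin_Int[OF this insert.IH] show ?case
    by (rule back_subst[of "openin _"]) (auto simp: dist_real_def abs_minus_commute)
qed



lemma blf_bound: "norm x \<le> 1 \<Longrightarrow> \<bar>blinfun_apply (h::'a::real_normed_vector \<Rightarrow>\<^sub>L real) x\<bar> \<le> norm h"
proof -
  assume "norm x \<le> 1"
  have "\<bar>blinfun_apply h x\<bar> \<le> norm h * norm x" using norm_blinfun[of h x] by simp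
  also have "\<dots> \<le> norm h * 1" using \<open>norm x \<le> 1\<close> by (intro mult_left_mono) auto
  finally show ?thesis by simp
qed

lemma dir1:
  assumes WO: "weakly_octahedral TYPE('a::real_normed_vector \<Rightarrow>\<^sub>L real)"
  shows "diameter_two_property TYPE('a)"
  unfolding diameter_two_property_def
proof (intro allI impI, elim conjE)
  fix W :: "'a set"
  assume Wo: "openin (subtopology weak_topology (cball 0 1)) W" and Wne: "W \<noteq> {}"
  obtain T where To: "openin weak_topology T" and WT: "W = T \<inter> cball 0 1"
    using Wo unfolding openin_subtopology by blast
  obtain x0 where x0: "x0 \<in> W" using Wne by blast
  have nx0: "norm x0 \<le> 1" using x0 WT by auto
  obtain I and \<delta> :: real where finI: "finite I" and d0: "\<delta> > 0"
    and IT: "{y. \<forall>f\<in>I. \<bar>blinfun_apply (f::'a \<Rightarrow>\<^sub>L real) y - blinfun_apply f x0\<bar> < \<delta>} \<subseteq> T"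
    using weak_nbhd[OF To, of x0] x0 WT by blast
  define S where "S = (\<Sum>f\<in>I. \<bar>blinfun_apply f x0\<bar>)"
  have S0: "S \<ge> 0" unfolding S_def by (simp add: sum_nonneg)
  define lam where "lam = min (1/2) (\<delta> / (2 * (S + 1)))"
  have l0: "lam > 0" using d0 S0 by (simp add: lam_def)
  have l1: "lam \<le> 1/2" unfolding lam_def by (rule min.cobounded1)
  have lS: "lam * S < \<delta> / 2"
  proof -
    have "lam * S \<le> \<delta> / (2 * (S + 1)) * S" using S0 by (intro mult_right_mono) (auto simp: lam_def)
    also have "\<dots> < \<delta> / 2" using S0 d0 by (simp add: field_simps)
    finally show ?thesis .
  qed
  define r where "r = 1 - lam"
  have r0: "r > 0" "r < 1" using l0 l1 by (auto simp: r_def)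
  define x1 where "x1 = r *\<^sub>R x0"
  have nx1: "norm x1 \<le> r" using nx0 r0 by (simp add: x1_def mult_left_le)
  have x1x0: "\<bar>blinfun_apply f x1 - blinfun_apply f x0\<bar> < \<delta> / 2" if "f \<in> I" for f
  proof -
    have "blinfun_apply f x1 - blinfun_apply f x0 = - lam * blinfun_apply f x0"
      by (simp add: x1_def r_def blinfun.scaleR_right blinfun.diff_right algebra_simps)
    hence "\<bar>blinfun_apply f x1 - blinfun_apply f x0\<bar> = lam * \<bar>blinfun_apply f x0\<bar>" using l0 by (simp add: abs_mult)
    also have "\<dots> \<le> lam * S" using l0 that finI unfolding S_def
      by (intro mult_left_mono member_le_sum) auto
    finally show ?thesis using lS by simp
  qed
  have inW: "u \<in> W" if nu: "norm u \<le> 1" and hu: "\<And>f. f \<in> I \<Longrightarrow> \<bar>blinfun_apply f u - blinfun_apply f x1\<bar> < \<delta> / 2" for u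
  proof -
    have "\<bar>blinfun_apply f u - blinfun_apply f x0\<bar> < \<delta>" if "f \<in> I" for f
      using x1x0[OF that] hu[OF that] by linarith
    hence "u \<in> T" using IT by blast
    thus ?thesis using WT nu by auto
  qed
  have bW: "bounded W" using WT by (intro bounded_subset[OF bounded_cball]) auto
  have le2: "diameter W \<le> 2"
  proof (rule diameter_le)
    fix x y assume "x \<in> W" "y \<in> W"
    hence "norm x \<le> 1" "norm y \<le> 1" using WT by auto
    thus "norm (x - y) \<le> 2" using norm_triangle_ineq4[of x y] by linarith
  qed (use Wne in auto)
  define A where "A = 2 * r / (1 - r)"
  have A0: "A > 0" using r0 by (simp add: A_def)
  have ge2: "2 \<le> diameter W"
  proof (rule field_le_epsilon)
    fix \<theta> :: real assume th: "\<theta> > 0"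
    define \<theta>' where "\<theta>' = min \<theta> 1"
    have th': "\<theta>' > 0" "\<theta>' \<le> 1" "\<theta>' \<le> \<theta>" using th by (auto simp: \<theta>'_def)
    define \<epsilon> where "\<epsilon> = \<theta>' / (4 * (1 + A))"
    have e0: "\<epsilon> > 0" using th' A0 by (simp add: \<epsilon>_def)
    have eA: "\<epsilon> * (1 + A) = \<theta>' / 4" using A0 by (simp add: \<epsilon>_def field_simps)
    have "\<epsilon> < \<epsilon> * (1 + A)" using e0 A0 by simp
    hence e1: "\<epsilon> < 1" using eA th' by linarith
    define t where "t = 1 - \<epsilon> * (1 + A)"
    have t: "t = 1 - \<theta>'/4" "t > 0" "t \<le> 1" using eA th' by (auto simp: t_def)
    define zs where "zs = Blinfun (\<lambda>f. blinfun_apply (f::'a \<Rightarrow>\<^sub>L real) x1)"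
    have zsa: "blinfun_apply zs f = blinfun_apply f x1" for f
      unfolding zs_def by (simp add: bounded_linear_Blinfun_apply[OF blinfun.bounded_linear_left])
    have nzs: "norm zs \<le> 1"
    proof (rule norm_blinfun_bound)
      fix f :: "'a \<Rightarrow>\<^sub>L real"
      have nx1': "norm x1 \<le> 1" using nx1 r0 by linarith
      show "norm (blinfun_apply zs f) \<le> 1 * norm f" unfolding zsa real_norm_def mult_1 by (rule blf_bound[OF nx1'])
    qed simp
    obtain y :: "'a \<Rightarrow>\<^sub>L real" where ny: "norm y = 1"
      and oct: "\<And>z. z \<in> span I \<Longrightarrow> (1 - \<epsilon>) * (\<bar>blinfun_apply zs z\<bar> + norm y) \<le> norm (z + y)"
      using WO[unfolded weakly_octahedral_def, rule_format, OF finI nzs e0] by blast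
    have key0: "t + \<bar>blinfun_apply h x1\<bar> \<le> norm (h + y)" if "h \<in> span I" for h
    proof -
      define a where "a = \<bar>blinfun_apply h x1\<bar>"
      have o: "(1 - \<epsilon>) * (a + 1) \<le> norm (h + y)" using oct[OF that] ny zsa by (simp add: a_def)
      have ah: "a \<le> norm h * r"
      proof -
        have "a \<le> norm h * norm x1" using norm_blinfun[of h x1] by (simp add: a_def)
        also have "\<dots> \<le> norm h * r" using nx1 by (intro mult_left_mono) auto
        finally show ?thesis .
      qed
      have hy: "norm h - 1 \<le> norm (h + y)"
      proof -
        have "norm ((h + y) - y) \<le> norm (h + y) + norm y" by (rule norm_triangle_ineq4)
        thus ?thesis using ny by simp
      qed
      show ?thesis
      proof (cases "a \<le> A")
        case True
        have "t + a = (1 - \<epsilon>) * (a + 1) + \<epsilon> * a - \<epsilon> * A" by (simp add: t_def algebra_simps)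
        also have "\<dots> \<le> (1 - \<epsilon>) * (a + 1)" using True e0 by (simp add: mult_left_mono)
        finally show ?thesis using o by (simp add: a_def)
      next
        case False
        have "a / r \<le> norm h" using ah r0 by (simp add: divide_le_eq)
        moreover have "a / r - a = a * (1 - r) / r" using r0 by (simp add: field_simps)
        moreover have "a * (1 - r) / r > A * (1 - r) / r" using False r0 by (simp add: divide_strict_right_mono)
        moreover have "A * (1 - r) / r = 2" unfolding A_def using r0 by simp
        ultimately have "a + 2 < norm h" by linarith
        thus ?thesis using hy t by (simp add: a_def)
      qed
    qed
    have key: "\<bar>d\<bar> * t + \<bar>blinfun_apply g x1\<bar> \<le> norm (d *\<^sub>R y + g)" if "g \<in> span I" for g d
    proof -
      have pos: "d * t + \<bar>blinfun_apply g x1\<bar> \<le> norm (d *\<^sub>R y + g)" if "d > 0" "g \<in> span I" for g d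
      proof -
        have "(1/d) *\<^sub>R g \<in> span I" using that by (simp add: span_scale)
        from key0[OF this] have "t + \<bar>blinfun_apply g x1\<bar> / d \<le> norm ((1/d) *\<^sub>R g + y)"
          using that by (simp add: blinfun.scaleR_left abs_mult)
        hence "d * (t + \<bar>blinfun_apply g x1\<bar> / d) \<le> d * norm ((1/d) *\<^sub>R g + y)"
          using that by (intro mult_left_mono) auto
        also have "d * norm ((1/d) *\<^sub>R g + y) = norm (d *\<^sub>R ((1/d) *\<^sub>R g + y))" using that by simp
        also have "d *\<^sub>R ((1/d) *\<^sub>R g + y) = d *\<^sub>R y + g" using that by (simp add: algebra_simps)
        finally show ?thesis using that by (simp add: algebra_simps)
      qed
      show ?thesis
      proof (cases d "0::real" rule: linorder_cases)
        case equal
        have "\<bar>blinfun_apply g x1\<bar> \<le> norm g" using blf_bound[of x1 g] nx1 r0 by simp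
        thus ?thesis using equal by simp
      next
        case greater thus ?thesis using pos[OF greater that] by simp
      next
        case less
        have mg: "-g \<in> span I" using that by (simp add: span_neg)
        have h: "(-d) * t + \<bar>blinfun_apply (-g) x1\<bar> \<le> norm ((-d) *\<^sub>R y + - g)"
          using pos[OF _ mg, of "-d"] less by simp
        have "(-d) *\<^sub>R y + - g = - (d *\<^sub>R y + g)" by simp
        hence e1: "norm ((-d) *\<^sub>R y + - g) = norm (d *\<^sub>R y + g)" by (simp only: norm_minus_cancel)
        have e2: "\<bar>blinfun_apply (-g) x1\<bar> = \<bar>blinfun_apply g x1\<bar>" by (simp add: blinfun.minus_left)
        have e3: "\<bar>d\<bar> = -d" using less by simp
        have e4: "\<bar>d\<bar> * t = (-d) * t" using e3 by simp
        show ?thesis using h e1 e2 e4 by linarith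
      qed
    qed
    have yI: "y \<notin> I"
    proof
      assume "y \<in> I"
      hence "-y \<in> span I" by (simp add: span_base span_neg)
      from key0[OF this] have "t + \<bar>blinfun_apply (-y) x1\<bar> \<le> 0" by simp
      thus False using t by simp
    qed
    define \<eta> where "\<eta> = min (\<delta>/2) (\<theta>'/4)"
    have eta0: "\<eta> > 0" using d0 th' by (simp add: \<eta>_def)
    have getpt: "\<exists>u. norm u \<le> 1 \<and> (\<forall>f\<in>insert y I. \<bar>blinfun_apply f u - (if f = y then s * t else blinfun_apply f x1)\<bar> < \<eta>)"
      if s: "\<bar>s\<bar> = 1" for s
    proof (rule helly[OF _ _ eta0])
      show "finite (insert y I)" using finI by simp
    next
      fix c
      define g where "g = (\<Sum>f\<in>I. c f *\<^sub>R f)"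
      have gI: "g \<in> span I" unfolding g_def by (intro span_sum span_scale span_base)
      have "(\<Sum>f\<in>insert y I. c f * (if f = y then s * t else blinfun_apply f x1))
            = c y * (s * t) + (\<Sum>f\<in>I. c f * blinfun_apply f x1)"
        using finI yI by (simp add: sum.insert) (intro sum.cong, auto)
      also have "(\<Sum>f\<in>I. c f * blinfun_apply f x1) = blinfun_apply g x1"
        by (simp add: g_def blinfun_sum_apply blinfun.scaleR_left)
      also have "c y * (s * t) + blinfun_apply g x1 \<le> \<bar>c y\<bar> * t + \<bar>blinfun_apply g x1\<bar>"
      proof -
        have "c y * (s * t) \<le> \<bar>c y * (s * t)\<bar>" by simp
        also have "\<dots> = \<bar>c y\<bar> * t" using s t by (simp add: abs_mult)
        finally show ?thesis by linarith
      qed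
      also have "\<dots> \<le> norm (c y *\<^sub>R y + g)" by (rule key[OF gI])
      also have "c y *\<^sub>R y + g = (\<Sum>f\<in>insert y I. c f *\<^sub>R f)" using finI yI by (simp add: g_def)
      finally show "(\<Sum>f\<in>insert y I. c f * (if f = y then s * t else blinfun_apply f x1)) \<le> norm (\<Sum>f\<in>insert y I. c f *\<^sub>R f)" .
    qed
    obtain u where nu: "norm u \<le> 1" and hu: "\<forall>f\<in>insert y I. \<bar>blinfun_apply f u - (if f = y then 1 * t else blinfun_apply f x1)\<bar> < \<eta>"
      using getpt[of 1] by auto
    obtain v where nv: "norm v \<le> 1" and hv: "\<forall>f\<in>insert y I. \<bar>blinfun_apply f v - (if f = y then (-1) * t else blinfun_apply f x1)\<bar> < \<eta>"
      using getpt[of "-1"] by auto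
    have uW: "u \<in> W"
    proof (rule inW[OF nu])
      fix f assume "f \<in> I"
      hence "\<bar>blinfun_apply f u - blinfun_apply f x1\<bar> < \<eta>" using hu yI by (metis insertCI)
      thus "\<bar>blinfun_apply f u - blinfun_apply f x1\<bar> < \<delta> / 2" unfolding \<eta>_def by simp
    qed
    have vW: "v \<in> W"
    proof (rule inW[OF nv])
      fix f assume "f \<in> I"
      hence "\<bar>blinfun_apply f v - blinfun_apply f x1\<bar> < \<eta>" using hv yI by (metis insertCI)
      thus "\<bar>blinfun_apply f v - blinfun_apply f x1\<bar> < \<delta> / 2" unfolding \<eta>_def by simp
    qed
    have yu: "blinfun_apply y u > t - \<eta>" using hu by auto
    have yv: "blinfun_apply y v < - t + \<eta>" using hv by auto
    have "blinfun_apply y (u - v) \<le> norm (u - v)"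
      using norm_blinfun[of y "u - v"] ny by simp
    hence "2 * t - 2 * \<eta> < dist u v" using yu yv by (simp add: blinfun.diff_right dist_norm)
    also have "dist u v \<le> diameter W" by (rule diameter_bounded_bound[OF bW uW vW])
    finally have "2 * t - 2 * \<eta> < diameter W" .
    moreover have "2 * t - 2 * \<eta> \<ge> 2 - \<theta>" using t th' unfolding \<eta>_def by linarith
    ultimately show "2 \<le> diameter W + \<theta>" by linarith
  qed
  show "diameter W = 2" using le2 ge2 by simp
qed



lemma dir2:
  assumes D: "diameter_two_property TYPE('a::real_normed_vector)"
  shows "weakly_octahedral TYPE('a \<Rightarrow>\<^sub>L real)"
  unfolding weakly_octahedral_def
proof (intro allI impI)
  fix F :: "('a \<Rightarrow>\<^sub>L real) set" and zs :: "('a \<Rightarrow>\<^sub>L real) \<Rightarrow>\<^sub>L real" and \<epsilon> :: real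
  assume finF: "finite F" and nzs: "norm zs \<le> 1" and e0: "\<epsilon> > 0"
  obtain B where BF: "B \<subseteq> F" and indB: "independent B" and FB: "F \<subseteq> span B"
    using maximal_independent_subset[of F] by blast
  have finB: "finite B" using BF finF finite_subset by blast
  have spanFB: "span F \<subseteq> span B" using span_mono[OF FB] by (simp add: span_span)
  obtain K where K0: "K \<ge> 0" and K: "\<And>c. (\<Sum>b\<in>B. \<bar>c b\<bar>) \<le> K * norm (\<Sum>b\<in>B. c b *\<^sub>R b)"
    using indep_bound[OF finB indB] by blast
  define M where "M = 2 / \<epsilon>"
  have M0: "M > 0" using e0 by (simp add: M_def)
  define \<eta> where "\<eta> = min 1 (\<epsilon> / (1 + K * M))"
  have KM: "1 + K * M > 0" using K0 M0 by (smt (verit) mult_nonneg_nonneg)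
  have eta0: "\<eta> > 0" using e0 KM by (simp add: \<eta>_def)
  have eta1: "\<eta> \<le> 1" by (simp add: \<eta>_def)
  have etaKM: "\<eta> * (1 + K * M) \<le> \<epsilon>"
  proof -
    have "1 + K * M > 0" using K0 M0 by (smt (verit) mult_nonneg_nonneg)
    thus ?thesis unfolding \<eta>_def by (smt (verit) min.cobounded2 pos_le_divide_eq)
  qed
  define W where "W = {x::'a. \<forall>b\<in>B. \<bar>blinfun_apply b x - blinfun_apply zs b\<bar> < \<eta>} \<inter> cball 0 1"
  have Wopen: "openin (subtopology weak_topology (cball 0 1)) W"
    unfolding openin_subtopology W_def using weak_open_finite[OF finB] by blast
  have "\<exists>x. norm x \<le> 1 \<and> (\<forall>f\<in>B. \<bar>blinfun_apply f x - blinfun_apply zs f\<bar> < \<eta>)"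
  proof (rule helly[OF finB _ eta0])
    fix c
    have "(\<Sum>f\<in>B. c f * blinfun_apply zs f) = blinfun_apply zs (\<Sum>f\<in>B. c f *\<^sub>R f)"
      by (simp add: blinfun.sum_right blinfun.scaleR_right)
    also have "\<dots> \<le> norm zs * norm (\<Sum>f\<in>B. c f *\<^sub>R f)" using norm_blinfun[of zs] by (smt (verit) real_norm_def)
    also have "\<dots> \<le> norm (\<Sum>f\<in>B. c f *\<^sub>R f)" using nzs by (simp add: mult_left_le_one_le)
    finally show "(\<Sum>f\<in>B. c f * blinfun_apply zs f) \<le> norm (\<Sum>f\<in>B. c f *\<^sub>R f)" .
  qed
  hence Wne: "W \<noteq> {}" unfolding W_def by auto
  have diam: "diameter W = 2" using D Wopen Wne unfolding diameter_two_property_def by blast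
  have "\<exists>x1\<in>W. \<exists>x2\<in>W. norm (x1 - x2) > 2 - \<eta>"
  proof (rule ccontr)
    assume "\<not> ?thesis"
    hence "diameter W \<le> 2 - \<eta>" using Wne by (intro diameter_le) (auto simp: not_less)
    thus False using diam eta0 by simp
  qed
  then obtain x1 x2 where x1: "x1 \<in> W" and x2: "x2 \<in> W" and x12: "norm (x1 - x2) > 2 - \<eta>" by blast
  obtain y where ny: "norm y \<le> 1" and yx: "blinfun_apply y (x1 - x2) = norm (x1 - x2)"
    using norming[of "x1 - x2"] by blast
  have nx1: "norm x1 \<le> 1" and nx2: "norm x2 \<le> 1" using x1 x2 unfolding W_def by auto
  have yb: "\<bar>blinfun_apply y x\<bar> \<le> 1" if "norm x \<le> 1" for x
    using norm_blinfun[of y x] ny that by (smt (verit) mult_le_one norm_ge_zero real_norm_def)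
  have ny1: "norm y = 1"
  proof -
    have "norm (x1 - x2) \<le> norm y * norm (x1 - x2)" using norm_blinfun[of y "x1 - x2"] yx by simp
    moreover have "norm (x1 - x2) > 0" using x12 eta1 by (smt (verit) norm_ge_zero)
    ultimately show ?thesis using ny by simp
  qed
  have yx1: "blinfun_apply y x1 > 1 - \<eta>"
    using yx x12 yb[OF nx2] by (simp add: blinfun.diff_right)
  have yx2: "blinfun_apply y x2 < -1 + \<eta>"
    using yx x12 yb[OF nx1] by (simp add: blinfun.diff_right)
  show "\<exists>y::'a \<Rightarrow>\<^sub>L real. norm y = 1 \<and>
            (\<forall>z\<in>span F. (1 - \<epsilon>) * (\<bar>blinfun_apply zs z\<bar> + norm y) \<le> norm (z + y))"
  proof (intro exI conjI ballI)
    show "norm y = 1" by fact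
  next
    fix z assume "z \<in> span F"
    hence "z \<in> span B" using spanFB by blast
    then obtain c where zc: "z = (\<Sum>b\<in>B. c b *\<^sub>R b)" using span_finite[OF finB] by blast
    have cK: "(\<Sum>b\<in>B. \<bar>c b\<bar>) \<le> K * norm z" using K[of c] zc by simp
    have close: "\<bar>blinfun_apply z x - blinfun_apply zs z\<bar> \<le> \<eta> * K * norm z" if xW: "x \<in> W" for x
    proof -
      have "blinfun_apply z x - blinfun_apply zs z = (\<Sum>b\<in>B. c b * (blinfun_apply b x - blinfun_apply zs b))"
        unfolding zc by (simp add: blinfun_sum_apply blinfun.sum_right blinfun.scaleR_right blinfun.scaleR_left
            right_diff_distrib sum_subtractf)
      also have "\<bar>\<dots>\<bar> \<le> (\<Sum>b\<in>B. \<bar>c b\<bar> * \<eta>)"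
      proof (rule order_trans[OF sum_abs], rule sum_mono)
        fix b assume "b \<in> B"
        hence "\<bar>blinfun_apply b x - blinfun_apply zs b\<bar> < \<eta>" using xW unfolding W_def by auto
        thus "\<bar>c b * (blinfun_apply b x - blinfun_apply zs b)\<bar> \<le> \<bar>c b\<bar> * \<eta>"
          by (simp add: abs_mult mult_left_mono)
      qed
      also have "\<dots> = \<eta> * (\<Sum>b\<in>B. \<bar>c b\<bar>)" by (simp add: sum_distrib_left mult.commute)
      also have "\<dots> \<le> \<eta> * (K * norm z)" using cK eta0 by (simp add: mult_left_mono)
      finally show ?thesis by (simp add: mult.assoc)
    qed
    have bx: "\<bar>blinfun_apply h x\<bar> \<le> norm h" if "norm x \<le> 1" for h :: "'a \<Rightarrow>\<^sub>L real" and x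
      using norm_blinfun[of h x] that by (smt (verit) mult_left_le norm_ge_zero real_norm_def)
    have l1: "norm (z + y) \<ge> blinfun_apply zs z - \<eta> * K * norm z + 1 - \<eta>"
    proof -
      have "blinfun_apply (z + y) x1 \<le> norm (z + y)" using bx[OF nx1, of "z + y"] by simp
      thus ?thesis using close[OF x1] yx1 by (simp add: blinfun.add_left)
    qed
    have l2: "norm (z + y) \<ge> - blinfun_apply zs z - \<eta> * K * norm z + 1 - \<eta>"
    proof -
      have "- blinfun_apply (z + y) x2 \<le> norm (z + y)" using bx[OF nx2, of "z + y"] by simp
      thus ?thesis using close[OF x2] yx2 by (simp add: blinfun.add_left)
    qed
    have l3: "norm (z + y) \<ge> norm z - 1"
    proof -
      have "norm ((z + y) - y) \<le> norm (z + y) + norm y" by (rule norm_triangle_ineq4)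
      thus ?thesis using ny1 by simp
    qed
    have zsz: "\<bar>blinfun_apply zs z\<bar> \<le> norm z"
    proof -
      have "\<bar>blinfun_apply zs z\<bar> \<le> norm zs * norm z" using norm_blinfun[of zs z] by simp
      also have "\<dots> \<le> 1 * norm z" using nzs by (intro mult_right_mono) auto
      finally show ?thesis by simp
    qed
    show "(1 - \<epsilon>) * (\<bar>blinfun_apply zs z\<bar> + norm y) \<le> norm (z + y)"
    proof (cases "norm z \<le> M")
      case True
      have "\<eta> * K * norm z \<le> \<eta> * K * M"
        using True eta0 K0 by (intro mult_left_mono) auto
      hence e1: "\<eta> * K * norm z + \<eta> \<le> \<epsilon>" using etaKM by (simp add: algebra_simps)
      have ab: "norm (z + y) \<ge> \<bar>blinfun_apply zs z\<bar> + 1 - \<epsilon>"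
      proof (cases "blinfun_apply zs z \<ge> 0")
        case True thus ?thesis using l1 e1 by linarith
      next
        case False thus ?thesis using l2 e1 by linarith
      qed
      have "(1 - \<epsilon>) * (\<bar>blinfun_apply zs z\<bar> + 1) = \<bar>blinfun_apply zs z\<bar> + 1 - \<epsilon> - \<epsilon> * \<bar>blinfun_apply zs z\<bar>"
        by (simp add: algebra_simps)
      also have "\<dots> \<le> \<bar>blinfun_apply zs z\<bar> + 1 - \<epsilon>" using e0 by simp
      finally show ?thesis using ab ny1 by simp
    next
      case False
      hence "M < norm z" by simp
      hence "\<epsilon> * M \<le> \<epsilon> * norm z" using e0 by simp
      moreover have "\<epsilon> * M = 2" unfolding M_def using e0 by simp
      ultimately have nz: "\<epsilon> * norm z \<ge> 2" by simp
      show ?thesis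
      proof (cases "\<epsilon> \<le> 1")
        case True
        have "(1 - \<epsilon>) * (\<bar>blinfun_apply zs z\<bar> + 1) \<le> (1 - \<epsilon>) * (norm z + 1)"
          using True zsz by (intro mult_left_mono) auto
        also have "\<dots> = norm z + 1 - \<epsilon> * norm z - \<epsilon>" by (simp add: algebra_simps)
        also have "\<dots> \<le> norm z - 1" using nz e0 by simp
        finally show ?thesis using l3 ny1 by simp
      next
        case False
        hence "(1 - \<epsilon>) * (\<bar>blinfun_apply zs z\<bar> + norm y) \<le> 0"
          by (intro mult_nonpos_nonneg) auto
        also have "0 \<le> norm (z + y)" by simp
        finally show ?thesis .
      qed
    qed
  qed
qed


theorem theorem3p4:
  assumes "\<exists>x::'a::banach. x \<noteq> 0"
  shows "diameter_two_property TYPE('a) \<longleftrightarrow> weakly_octahedral TYPE('a \<Rightarrow>\<^sub>L real)"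
  using dir1[where 'a='a] dir2[where 'a='a] by blast

end
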